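(* Let $G=(G^0,G^1,r,s)$ be a topological graph in which $G^0$ and $G^1$ are compact Hausdorff spaces and $r,s:G^1\to G^0$ are surjective local homeomorphisms. For $m,n\in\mathbb{N}$ let $G^1_{m,n}:=\{e\in G^1:|r(e)G^1|=m\text{ and }|G^1s(e)|=n\}$. Then the sets $G^1_{m,n}$ are compact open, as are $s(G^1_{m,n})$ and $r(G^1_{m,n})$.
   Context: For $v\in G^0$, $G^1v:=s^{-1}(v)$ and $vG^1:=r^{-1}(v)$; $|\cdot|$ denotes cardinality. *)

theory Defs
  imports "HOL-Analysis.Analysis"
begin

definition local_homeomorphism_map :: "'a topology \<Rightarrow> 'b topology \<Rightarrow> ('a \<Rightarrow> 'b) \<Rightarrow> bool" where
  "local_homeomorphism_map X Y f \<longleftrightarrow>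
     f \<in> topspace X \<rightarrow> topspace Y \<and>
     (\<forall>x\<in>topspace X. \<exists>U. openin X U \<and> x \<in> U \<and> openin Y (f ` U) \<and>
        homeomorphic_map (subtopology X U) (subtopology Y (f ` U)) f)"

definition range_fibre :: "'e topology \<Rightarrow> ('e \<Rightarrow> 'v) \<Rightarrow> 'v \<Rightarrow> 'e set" where
  "range_fibre G1 r v = {f \<in> topspace G1. r f = v}"

definition source_fibre :: "'e topology \<Rightarrow> ('e \<Rightarrow> 'v) \<Rightarrow> 'v \<Rightarrow> 'e set" where
  "source_fibre G1 s v = {f \<in> topspace G1. s f = v}"

definition edges_mn :: "'e topology \<Rightarrow> ('e \<Rightarrow> 'v) \<Rightarrow> ('e \<Rightarrow> 'v) \<Rightarrow> nat \<Rightarrow> nat \<Rightarrow> 'e set" where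
  "edges_mn G1 r s m n =
     {e \<in> topspace G1.
        finite (range_fibre G1 r (r e)) \<and> card (range_fibre G1 r (r e)) = m \<and>
        finite (source_fibre G1 s (s e)) \<and> card (source_fibre G1 s (s e)) = n}"

end

theory Submission
  imports Defs
begin

lemma lh_local:
  assumes "local_homeomorphism_map X Y f" "x \<in> topspace X"
  shows "\<exists>U. openin X U \<and> x \<in> U \<and> openin Y (f ` U) \<and> inj_on f U"
proof -
  obtain U where U: "openin X U" "x \<in> U" "openin Y (f ` U)"
    "homeomorphic_map (subtopology X U) (subtopology Y (f ` U)) f"
    using assms unfolding local_homeomorphism_map_def by blast
  have "inj_on f (topspace (subtopology X U))"
    using homeomorphic_imp_injective_map[OF U(4)] .
  moreover have "topspace (subtopology X U) = U"
    using U(1) openin_subset by fastforce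
  ultimately show ?thesis using U by auto
qed

lemma lh_cont:
  assumes "local_homeomorphism_map X Y f"
  shows "continuous_map X Y f"
  unfolding continuous_map_alt
proof (intro conjI allI impI)
  show "f \<in> topspace X \<rightarrow> topspace Y" using assms unfolding local_homeomorphism_map_def by (rule conjunct1)
  fix V assume V: "openin Y V"
  show "openin X (f -` V \<inter> topspace X)"
  proof (subst openin_subopen, intro ballI)
    fix x assume x: "x \<in> f -` V \<inter> topspace X"
    obtain U where U: "openin X U" "x \<in> U" "openin Y (f ` U)"
      "homeomorphic_map (subtopology X U) (subtopology Y (f ` U)) f"
      using assms x unfolding local_homeomorphism_map_def by blast
    have c: "continuous_map (subtopology X U) (subtopology Y (f ` U)) f"
      using U(4) homeomorphic_imp_continuous_map by blast
    have "openin (subtopology Y (f ` U)) (V \<inter> f ` U)"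
      using V openin_subtopology_Int by blast
    then have "openin (subtopology X U) (f -` (V \<inter> f ` U) \<inter> topspace (subtopology X U))"
      using c continuous_map_open by blast
    moreover have "f -` (V \<inter> f ` U) \<inter> topspace (subtopology X U) = f -` V \<inter> U"
      using U(1) openin_subset by fastforce
    ultimately have "openin X (f -` V \<inter> U)"
      using openin_open_subtopology[OF U(1)] by auto
    then show "\<exists>T. openin X T \<and> x \<in> T \<and> T \<subseteq> f -` V \<inter> topspace X"
      using x U openin_subset by (intro exI[of _ "f -` V \<inter> U"]) auto
  qed
qed

lemma lh_open:
  assumes "local_homeomorphism_map X Y f" "openin X W"
  shows "openin Y (f ` W)"
proof (subst openin_subopen, intro ballI)
  fix y assume "y \<in> f ` W"
  then obtain x where x: "x \<in> W" "y = f x" by auto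
  have xt: "x \<in> topspace X" using x assms(2) openin_subset by blast
  obtain U where U: "openin X U" "x \<in> U" "openin Y (f ` U)"
    "homeomorphic_map (subtopology X U) (subtopology Y (f ` U)) f"
    using assms xt unfolding local_homeomorphism_map_def by blast
  have tU: "topspace (subtopology X U) = U"
    using U(1) openin_subset by fastforce
  have "openin (subtopology X U) (U \<inter> W)"
    using assms(2) openin_subtopology_Int2 by blast
  then have "openin (subtopology Y (f ` U)) (f ` (U \<inter> W))"
    using homeomorphic_map_openness[OF U(4), of "U \<inter> W"] tU by auto
  then have "openin Y (f ` (U \<inter> W))"
    using openin_open_subtopology[OF U(3)] by auto
  then show "\<exists>T. openin Y T \<and> y \<in> T \<and> T \<subseteq> f ` W"
    using x U by (intro exI[of _ "f ` (U \<inter> W)"]) auto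
qed


lemma fibre_lemma:
  fixes X :: "'a topology" and Y :: "'b topology"
  assumes cX: "compact_space X" and hX: "Hausdorff_space X" and hY: "Hausdorff_space Y"
    and lh: "local_homeomorphism_map X Y f" and y: "y \<in> topspace Y"
  shows "finite {x \<in> topspace X. f x = y} \<and> (\<exists>V. openin Y V \<and> y \<in> V \<and>
     (\<forall>z\<in>V. finite {x \<in> topspace X. f x = z} \<and>
        card {x \<in> topspace X. f x = z} = card {x \<in> topspace X. f x = y}))"
proof -
  define Fb where "Fb z = {x \<in> topspace X. f x = z}" for z
  have cont: "continuous_map X Y f" using lh_cont[OF lh] .
  define F where "F = Fb y"
  have "closedin X F" unfolding F_def Fb_def
    using closedin_continuous_map_preimage[OF cont, of "{y}"]
      closedin_t1_singleton[OF Hausdorff_imp_t1_space[OF hY] y] by simp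
  then have cF: "compactin X F" using closedin_compact_space cX by blast
  have "\<forall>x\<in>topspace X. \<exists>U. openin X U \<and> x \<in> U \<and> openin Y (f ` U) \<and> inj_on f U"
    using lh_local[OF lh] by blast
  then obtain U where U: "\<And>x. x \<in> topspace X \<Longrightarrow> openin X (U x) \<and> x \<in> U x \<and> openin Y (f ` U x) \<and> inj_on f (U x)"
    by metis
  have Ftop: "F \<subseteq> topspace X" unfolding F_def Fb_def by auto
  have "(\<forall>V\<in>U ` F. openin X V) \<and> F \<subseteq> \<Union>(U ` F)" using U Ftop by blast
  then obtain \<F> where FF: "finite \<F>" "\<F> \<subseteq> U ` F" "F \<subseteq> \<Union>\<F>"
    using cF unfolding compactin_def by meson
  then obtain P where P: "P \<subseteq> F" "finite P" "\<F> = U ` P"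
    using finite_subset_image by metis
  have "F \<subseteq> P"
  proof
    fix x assume x: "x \<in> F"
    then obtain p where p: "p \<in> P" "x \<in> U p" using FF P by auto
    have pF: "p \<in> F" using p P by auto
    have "p \<in> topspace X" using pF Ftop by auto
    have "f x = f p" using x pF unfolding F_def Fb_def by auto
    then have "x = p" using U[OF \<open>p\<in>topspace X\<close>] p inj_onD by metis
    then show "x \<in> P" using p by simp
  qed
  then have finF: "finite F" using P finite_subset by blast
  have "\<forall>p\<in>F. \<forall>q\<in>F. p \<noteq> q \<longrightarrow> (\<exists>S T. openin X S \<and> openin X T \<and> p \<in> S \<and> q \<in> T \<and> disjnt S T)"
    using hX Ftop unfolding Hausdorff_space_def by blast
  then obtain S T where ST: "\<And>p q. p \<in> F \<Longrightarrow> q \<in> F \<Longrightarrow> p \<noteq> q \<Longrightarrow>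
      openin X (S p q) \<and> openin X (T p q) \<and> p \<in> S p q \<and> q \<in> T p q \<and> disjnt (S p q) (T p q)"
    by metis
  define W where "W p = U p \<inter> \<Inter>((\<lambda>q. S p q \<inter> T q p) ` (F - {p}))" for p
  have Wopen: "openin X (W p)" if "p \<in> F" for p
    unfolding W_def
    apply (rule openin_Int_Inter)
    using finF that U Ftop ST by (auto intro!: openin_Int)
  have pW: "p \<in> W p" if "p \<in> F" for p using that U Ftop ST unfolding W_def by auto
  have Wsub: "W p \<subseteq> U p" for p unfolding W_def by auto
  have Wdisj: "W p \<inter> W q = {}" if "p \<in> F" "q \<in> F" "p \<noteq> q" for p q
  proof -
    have "W p \<subseteq> S p q" unfolding W_def using that by auto
    moreover have "W q \<subseteq> T p q" unfolding W_def using that by auto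
    ultimately show ?thesis using ST[OF that] by (auto simp: disjnt_def)
  qed
  define D where "D = topspace X - \<Union>(W ` F)"
  have "openin X (\<Union>(W ` F))" using Wopen by auto
  then have "closedin X D" unfolding D_def by (intro closedin_diff) auto
  then have "compactin Y (f ` D)" using closedin_compact_space[OF cX] image_compactin cont by blast
  then have cfD: "closedin Y (f ` D)" using compactin_imp_closedin hY by blast
  have yD: "y \<notin> f ` D"
  proof
    assume "y \<in> f ` D" then obtain d where d: "d \<in> D" "f d = y" by auto
    then have "d \<in> F" unfolding D_def F_def Fb_def by auto
    then show False using d pW unfolding D_def by auto
  qed
  define V where "V = (topspace Y - f ` D) \<inter> \<Inter>((\<lambda>p. f ` W p) ` F)"
  have oV: "openin Y V" unfolding V_def
    apply (rule openin_Int_Inter)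
    using finF cfD lh_open[OF lh] Wopen by auto
  have yV: "y \<in> V" unfolding V_def using y yD pW by (auto simp: F_def Fb_def)
  have main: "finite (Fb z) \<and> card (Fb z) = card F" if z: "z \<in> V" for z
  proof -
    have cover: "Fb z = (\<Union>p\<in>F. W p \<inter> Fb z)"
    proof
      show "Fb z \<subseteq> (\<Union>p\<in>F. W p \<inter> Fb z)"
      proof
        fix x assume x: "x \<in> Fb z"
        have "x \<notin> D"
        proof
          assume "x \<in> D" then have "z \<in> f ` D" using x unfolding Fb_def by auto
          then show False using z unfolding V_def by auto
        qed
        then show "x \<in> (\<Union>p\<in>F. W p \<inter> Fb z)" using x unfolding D_def Fb_def by auto
      qed
    qed auto
    have single: "\<exists>x. W p \<inter> Fb z = {x}" if p: "p \<in> F" for p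
    proof -
      have "z \<in> f ` W p" using z p unfolding V_def by auto
      then obtain x where x: "x \<in> W p" "f x = z" by auto
      have pt: "p \<in> topspace X" using p Ftop by auto
      have Ut: "U p \<subseteq> topspace X" using U[OF pt] openin_subset by blast
      have "W p \<inter> Fb z = {x}"
      proof
        show "{x} \<subseteq> W p \<inter> Fb z" using x Wsub Ut unfolding Fb_def by auto
        show "W p \<inter> Fb z \<subseteq> {x}"
        proof
          fix x' assume x': "x' \<in> W p \<inter> Fb z"
          then have "f x' = f x" "x' \<in> U p" "x \<in> U p" using x Wsub unfolding Fb_def by auto
          then show "x' \<in> {x}" using U[OF pt] inj_onD by fastforce
        qed
      qed
      then show ?thesis by blast
    qed
    have fc: "finite (W p \<inter> Fb z) \<and> card (W p \<inter> Fb z) = 1" if pF: "p \<in> F" for p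
    proof -
      obtain x where "W p \<inter> Fb z = {x}" using single[OF pF] by blast
      then show ?thesis by simp
    qed
    have fin: "\<forall>p\<in>F. finite (W p \<inter> Fb z)" using fc by blast
    have c1: "\<forall>p\<in>F. card (W p \<inter> Fb z) = 1" using fc by blast
    have cu: "card (\<Union>p\<in>F. W p \<inter> Fb z) = (\<Sum>p\<in>F. card (W p \<inter> Fb z))"
      by (rule card_UN_disjoint[OF finF fin]) (use Wdisj in blast)
    have "card (Fb z) = card (\<Union>p\<in>F. W p \<inter> Fb z)" using cover by (rule arg_cong)
    also have "\<dots> = (\<Sum>p\<in>F. card (W p \<inter> Fb z))" by (rule cu)
    also have "\<dots> = card F" using c1 by simp
    finally have cz: "card (Fb z) = card F" .
    have fU: "finite (\<Union>p\<in>F. W p \<inter> Fb z)" by (rule finite_UN_I[OF finF]) (use fin in blast)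
    have "finite (Fb z)" by (subst cover) (rule fU)
    then show ?thesis using cz by (rule conjI)
  qed
  show ?thesis
    using main oV yV finF unfolding F_def Fb_def by blast
qed


theorem mainTheorem10:
  fixes G0 :: "'v topology" and G1 :: "'e topology" and r s :: "'e \<Rightarrow> 'v"
  assumes "compact_space G0" "Hausdorff_space G0"
    and "compact_space G1" "Hausdorff_space G1"
    and "local_homeomorphism_map G1 G0 r" "r ` topspace G1 = topspace G0"
    and "local_homeomorphism_map G1 G0 s" "s ` topspace G1 = topspace G0"
  shows "\<forall>m n.
     compactin G1 (edges_mn G1 r s m n) \<and> openin G1 (edges_mn G1 r s m n) \<and>
     compactin G0 (s ` edges_mn G1 r s m n) \<and> openin G0 (s ` edges_mn G1 r s m n) \<and>
     compactin G0 (r ` edges_mn G1 r s m n) \<and> openin G0 (r ` edges_mn G1 r s m n)"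
proof (intro allI)
  fix m n
  define E where "E = edges_mn G1 r s m n"
  have cr: "continuous_map G1 G0 r" using lh_cont[OF assms(5)] .
  have cs: "continuous_map G1 G0 s" using lh_cont[OF assms(7)] .
  have rt: "r e \<in> topspace G0" if "e \<in> topspace G1" for e
    using cr that unfolding continuous_map_def by blast
  have st: "s e \<in> topspace G0" if "e \<in> topspace G1" for e
    using cs that unfolding continuous_map_def by blast
  have loc: "\<exists>W. openin G1 W \<and> e \<in> W \<and> (\<forall>e'\<in>W. e' \<in> topspace G1 \<and> (e' \<in> E \<longleftrightarrow> e \<in> E))"
    if e: "e \<in> topspace G1" for e
  proof -
    obtain Vr where Vr: "openin G0 Vr" "r e \<in> Vr"
      "\<forall>z\<in>Vr. finite {x \<in> topspace G1. r x = z} \<and>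
        card {x \<in> topspace G1. r x = z} = card {x \<in> topspace G1. r x = r e}"
      and fr: "finite {x \<in> topspace G1. r x = r e}"
      using fibre_lemma[OF assms(3,4,2,5) rt[OF e]] by blast
    obtain Vs where Vs: "openin G0 Vs" "s e \<in> Vs"
      "\<forall>z\<in>Vs. finite {x \<in> topspace G1. s x = z} \<and>
        card {x \<in> topspace G1. s x = z} = card {x \<in> topspace G1. s x = s e}"
      and fs: "finite {x \<in> topspace G1. s x = s e}"
      using fibre_lemma[OF assms(3,4,2,7) st[OF e]] by blast
    define W where "W = {x \<in> topspace G1. r x \<in> Vr} \<inter> {x \<in> topspace G1. s x \<in> Vs}"
    have "openin G1 W" unfolding W_def
      using openin_continuous_map_preimage[OF cr Vr(1)] openin_continuous_map_preimage[OF cs Vs(1)]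
      by (rule openin_Int)
    moreover have "e \<in> W" unfolding W_def using e Vr Vs by auto
    moreover have "\<forall>e'\<in>W. e' \<in> topspace G1 \<and> (e' \<in> E \<longleftrightarrow> e \<in> E)"
    proof
      fix e' assume e': "e' \<in> W"
      then have t: "e' \<in> topspace G1" "r e' \<in> Vr" "s e' \<in> Vs" unfolding W_def by auto
      have a: "finite {x \<in> topspace G1. r x = r e'} \<and>
        card {x \<in> topspace G1. r x = r e'} = card {x \<in> topspace G1. r x = r e}"
        using Vr(3) t(2) by blast
      have b: "finite {x \<in> topspace G1. s x = s e'} \<and>
        card {x \<in> topspace G1. s x = s e'} = card {x \<in> topspace G1. s x = s e}"
        using Vs(3) t(3) by blast
      show "e' \<in> topspace G1 \<and> (e' \<in> E \<longleftrightarrow> e \<in> E)"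
        using t(1) e a b fr fs
        unfolding E_def edges_mn_def range_fibre_def source_fibre_def by auto
    qed
    ultimately show ?thesis by blast
  qed
  have Esub: "E \<subseteq> topspace G1" unfolding E_def edges_mn_def by auto
  have oE: "openin G1 E"
  proof (subst openin_subopen, intro ballI)
    fix e assume "e \<in> E"
    then obtain W where "openin G1 W" "e \<in> W" "\<forall>e'\<in>W. e' \<in> topspace G1 \<and> (e' \<in> E \<longleftrightarrow> e \<in> E)"
      using loc Esub by blast
    then show "\<exists>T. openin G1 T \<and> e \<in> T \<and> T \<subseteq> E" using \<open>e \<in> E\<close> by blast
  qed
  have "openin G1 (topspace G1 - E)"
  proof (subst openin_subopen, intro ballI)
    fix e assume ee: "e \<in> topspace G1 - E"
    then obtain W where "openin G1 W" "e \<in> W" "\<forall>e'\<in>W. e' \<in> topspace G1 \<and> (e' \<in> E \<longleftrightarrow> e \<in> E)"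
      using loc by blast
    then show "\<exists>T. openin G1 T \<and> e \<in> T \<and> T \<subseteq> topspace G1 - E" using ee by blast
  qed
  then have "closedin G1 E" using Esub unfolding closedin_def by blast
  then have cE: "compactin G1 E" using closedin_compact_space[OF assms(3)] by blast
  show "compactin G1 (edges_mn G1 r s m n) \<and> openin G1 (edges_mn G1 r s m n) \<and>
     compactin G0 (s ` edges_mn G1 r s m n) \<and> openin G0 (s ` edges_mn G1 r s m n) \<and>
     compactin G0 (r ` edges_mn G1 r s m n) \<and> openin G0 (r ` edges_mn G1 r s m n)"
    unfolding E_def[symmetric]
    using cE oE image_compactin[OF cE cs] image_compactin[OF cE cr]
      lh_open[OF assms(5) oE] lh_open[OF assms(7) oE] by blast
qed

end
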